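(* Let $A$ be an essential Banach algebra and $X$ a Banach $A$-bimodule. Then for all integers $n\geq 3$, $Mul_{n-1}(A,X)=Mul_{n}(A,X)$. In particular $Mul_{2}(A,X)=Mul_{n}(A,X)$ for all $n\geq 2$.
   Context: A Banach algebra $A$ is essential if $\overline{A^2}=A$, where $A^2=\mathrm{span}\{ab:a,b\in A\}$. For $n\ge 2$, a bounded linear map $T:A\to X$ is an $n$-multiplier if $T(a_1\cdots a_n)=a_1\cdot T(a_2\cdots a_n)=T(a_1\cdots a_{n-1})\cdot a_n$ for all $a_i\in A$; $Mul_n(A,X)$ is the set of all $n$-multipliers from $A$ into $X$. *)

theory Defs
  imports "HOL-Analysis.Analysis"
begin

fun prodl :: "'a::semigroup_mult list \<Rightarrow> 'a" where
  "prodl [] = undefined"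
| "prodl [x] = x"
| "prodl (x # y # xs) = x * prodl (y # xs)"

definition essential :: "'a::{real_normed_algebra,banach} itself \<Rightarrow> bool" where
  "essential _ \<longleftrightarrow> closure (span {a * b | a b :: 'a. True}) = UNIV"

definition banach_bimodule ::
  "('a::{real_normed_algebra,banach} \<Rightarrow> 'x::banach \<Rightarrow> 'x) \<Rightarrow> ('x \<Rightarrow> 'a \<Rightarrow> 'x) \<Rightarrow> bool" where
  "banach_bimodule lm rm \<longleftrightarrow>
     bounded_bilinear lm \<and> bounded_bilinear rm \<and>
     (\<forall>a b x. lm (a * b) x = lm a (lm b x)) \<and>
     (\<forall>a b x. rm x (a * b) = rm (rm x a) b) \<and>
     (\<forall>a b x. rm (lm a x) b = lm a (rm x b))"

definition Mul ::
  "nat \<Rightarrow> ('a::{real_normed_algebra,banach} \<Rightarrow> 'x::banach \<Rightarrow> 'x) \<Rightarrow> ('x \<Rightarrow> 'a \<Rightarrow> 'x)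
    \<Rightarrow> ('a \<Rightarrow> 'x) set" where
  "Mul n lm rm = {T. bounded_linear T \<and>
     (\<forall>a as. length as = n - 1 \<longrightarrow> T (prodl (a # as)) = lm a (T (prodl as))) \<and>
     (\<forall>as b. length as = n - 1 \<longrightarrow> T (prodl (as @ [b])) = rm (T (prodl as)) b)}"

end

theory Submission
  imports Defs
begin

lemma prodl_snoc2: "prodl (xs @ [c, d]) = prodl (xs @ [c * (d::'a::semigroup_mult)])"
proof (induction xs rule: prodl.induct)
  case 1 then show ?case by simp
next
  case (2 x) then show ?case by simp
next
  case (3 x y xs) then show ?case by simp
qed

lemma prodl_cons2: "prodl (c # d # xs) = prodl ((c * (d::'a::semigroup_mult)) # xs)"
  by (cases xs) (simp_all add: mult.assoc)

lemma prodl_snoc: "prodl (ys @ [x]) = (if ys = [] then x else prodl ys * (x::'a::semigroup_mult))"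
proof (induction ys rule: prodl.induct)
  case 1 then show ?case by simp
next
  case (2 y) then show ?case by simp
next
  case (3 x y xs) then show ?case by (simp add: mult.assoc)
qed

lemma prodl_cons: "prodl (x # ys) = (if ys = [] then x else (x::'a::semigroup_mult) * prodl ys)"
  by (cases ys) simp_all

lemma zero_on_closure_span:
  assumes "bounded_linear f" "\<forall>x\<in>S. f x = 0" "y \<in> closure (span S)"
  shows "f y = 0"
proof -
  interpret f: bounded_linear f by fact
  have "linear f" by (simp add: f.linear)
  have ss: "subspace {x. f x = 0}" unfolding subspace_def by (simp add: f.add f.scaleR f.zero)
  have sub: "span S \<subseteq> {x. f x = 0}" using span_minimal[OF _ ss] assms(2) by auto
  have cl: "closed {x. f x = 0}"
    by (intro closed_Collect_eq continuous_intros f.continuous_on continuous_on_id)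
  have "closure (span S) \<subseteq> {x. f x = 0}" using closure_minimal[OF sub cl] .
  then show ?thesis using assms(3) by auto
qed

lemma ess_zero:
  fixes f :: "'a::{real_normed_algebra,banach} \<Rightarrow> 'x::real_normed_vector"
  assumes "essential TYPE('a)" "bounded_linear f" "\<And>c d. f (c * d) = 0"
  shows "f y = 0"
  using zero_on_closure_span[OF assms(2), of "{a * b | a b :: 'a. True}" y] assms(1,3)
  unfolding essential_def by auto

lemma bl_snoc: "bounded_linear (\<lambda>x. prodl (ys @ [x::'a::real_normed_algebra]))"
  unfolding prodl_snoc by (cases "ys = []") (auto intro: bounded_linear_ident bounded_linear_mult_right)

lemma bl_cons: "bounded_linear (\<lambda>x. prodl ((x::'a::real_normed_algebra) # ys))"
  unfolding prodl_cons by (cases "ys = []") (auto intro: bounded_linear_ident bounded_linear_mult_left)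

lemma split2: "length as \<ge> 2 \<Longrightarrow> \<exists>bs c d. as = bs @ [c, d]"
  by (cases as rule: rev_cases; cases "butlast as" rule: rev_cases) auto

lemma split2': "length as \<ge> 2 \<Longrightarrow> \<exists>cs c d. as = c # d # cs"
  by (cases as; cases "tl as") auto

lemma up:
  assumes "m \<ge> 2" "T \<in> Mul m lm rm"
  shows "T \<in> Mul (Suc m) lm rm"
proof -
  have bl: "bounded_linear T"
    and L: "\<And>a as. length as = m - 1 \<Longrightarrow> T (prodl (a # as)) = lm a (T (prodl as))"
    and R: "\<And>as b. length as = m - 1 \<Longrightarrow> T (prodl (as @ [b])) = rm (T (prodl as)) b"
    using assms(2) unfolding Mul_def by auto
  have L': "T (prodl (a # as)) = lm a (T (prodl as))" if "length as = m" for a as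
  proof -
    have "\<exists>bs c d. as = bs @ [c, d]" using split2[of as] that assms(1) by simp
    then obtain bs c d where as: "as = bs @ [c, d]" by blast
    have "T (prodl (a # as)) = T (prodl (a # bs @ [c * d]))"
      using prodl_snoc2[of "a # bs" c d] by (simp add: as)
    also have "\<dots> = lm a (T (prodl (bs @ [c * d])))" using L[of "bs @ [c*d]" a] that as by simp
    also have "\<dots> = lm a (T (prodl as))" by (simp add: as prodl_snoc2)
    finally show ?thesis .
  qed
  have R': "T (prodl (as @ [b])) = rm (T (prodl as)) b" if "length as = m" for as b
  proof -
    have "\<exists>cs c d. as = c # d # cs" using split2'[of as] that assms(1) by simp
    then obtain cs c d where as: "as = c # d # cs" by blast
    have "T (prodl (as @ [b])) = T (prodl ((c*d) # cs @ [b]))"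
      using prodl_cons2[of c d "cs @ [b]"] by (simp only: as append_Cons)
    also have "\<dots> = rm (T (prodl ((c*d) # cs))) b" using R[of "(c*d) # cs" b] that as by simp
    also have "\<dots> = rm (T (prodl as)) b" using prodl_cons2[of c d cs] by (simp only: as)
    finally show ?thesis .
  qed
  show ?thesis unfolding Mul_def using bl L' R' by auto
qed

lemma down:
  assumes ess: "essential TYPE('a::{real_normed_algebra,banach})"
    and bm: "banach_bimodule (lm :: 'a \<Rightarrow> 'x::banach \<Rightarrow> 'x) rm"
    and "m \<ge> 2" "T \<in> Mul (Suc m) lm rm"
  shows "T \<in> Mul m lm rm"
proof -
  have bl: "bounded_linear T"
    and L: "\<And>a as. length as = m \<Longrightarrow> T (prodl (a # as)) = lm a (T (prodl as))"
    and R: "\<And>as b. length as = m \<Longrightarrow> T (prodl (as @ [b])) = rm (T (prodl as)) b"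
    using assms(4) unfolding Mul_def by auto
  have bbl: "bounded_bilinear lm" "bounded_bilinear rm" using bm unfolding banach_bimodule_def by auto
  have L': "T (prodl (a # as)) = lm a (T (prodl as))" if "length as = m - 1" for a as
  proof -
    have "as \<noteq> []" using that assms(3) by auto
    then obtain bs x where as: "as = bs @ [x]"
      by (cases as rule: rev_cases) auto
    let ?f = "\<lambda>x. T (prodl ((a # bs) @ [x])) - lm a (T (prodl (bs @ [x])))"
    have "bounded_linear ?f"
      by (intro bounded_linear_sub bounded_linear_compose[OF bl] bl_snoc
          bounded_linear_compose[OF bounded_bilinear.bounded_linear_right[OF bbl(1)]])
    moreover have "?f (c * d) = 0" for c d
    proof -
      have "T (prodl ((a # bs) @ [c * d])) = T (prodl (a # bs @ [c, d]))"
        using prodl_snoc2[of "a # bs" c d] by simp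
      also have "\<dots> = lm a (T (prodl (bs @ [c, d])))" using L[of "bs @ [c,d]" a] that as by simp
      finally show ?thesis by (simp add: prodl_snoc2)
    qed
    ultimately have "?f x = 0" using ess_zero[OF ess] by blast
    then show ?thesis by (simp add: as)
  qed
  have R': "T (prodl (as @ [b])) = rm (T (prodl as)) b" if "length as = m - 1" for as b
  proof -
    have "as \<noteq> []" using that assms(3) by auto
    then obtain cs x where as: "as = x # cs" by (cases as) auto
    let ?f = "\<lambda>x. T (prodl (x # (cs @ [b]))) - rm (T (prodl (x # cs))) b"
    have "bounded_linear ?f"
      by (intro bounded_linear_sub bounded_linear_compose[OF bl] bl_cons
          bounded_linear_compose[OF bounded_bilinear.bounded_linear_left[OF bbl(2)]])
    moreover have "?f (c * d) = 0" for c d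
    proof -
      have "T (prodl ((c * d) # (cs @ [b]))) = T (prodl ((c # d # cs) @ [b]))"
        using prodl_cons2[of c d "cs @ [b]"] by (simp only: append_Cons)
      also have "\<dots> = rm (T (prodl (c # d # cs))) b" using R[of "c # d # cs" b] that as by simp
      finally show ?thesis using prodl_cons2[of c d cs] by (simp only: append_Cons) simp
    qed
    ultimately have "?f x = 0" using ess_zero[OF ess] by blast
    then show ?thesis by (simp add: as)
  qed
  show ?thesis unfolding Mul_def using bl L' R' by auto
qed

theorem theorem2p4:
  fixes lm :: "'a::{real_normed_algebra,banach} \<Rightarrow> 'x::banach \<Rightarrow> 'x"
    and rm :: "'x \<Rightarrow> 'a \<Rightarrow> 'x"
  assumes "essential TYPE('a)"
    and "banach_bimodule lm rm"
  shows "(\<forall>n::nat. n \<ge> 3 \<longrightarrow> Mul (n - 1) lm rm = Mul n lm rm)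
       \<and> (\<forall>n::nat. n \<ge> 2 \<longrightarrow> Mul 2 lm rm = Mul n lm rm)"
proof -
  have stp: "Mul m lm rm = Mul (Suc m) lm rm" if "m \<ge> 2" for m
    using up[OF that] down[OF assms that] by blast
  have A: "\<forall>n::nat. n \<ge> 3 \<longrightarrow> Mul (n - 1) lm rm = Mul n lm rm"
  proof (intro allI impI)
    fix n :: nat assume "n \<ge> 3"
    then show "Mul (n - 1) lm rm = Mul n lm rm" using stp[of "n - 1"] by (simp add: Suc_diff_1)
  qed
  have B: "Mul 2 lm rm = Mul n lm rm" if "n \<ge> 2" for n
    using that
  proof (induction n rule: dec_induct)
    case base then show ?case by simp
  next
    case (step k) then show ?case using stp[of k] by simp
  qed
  show ?thesis using A B by blast
qed

end
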